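(* Let $F$ be any field, $N\in\mathbb{N}$, and $p,p'\in\mathbb{N}$ with $p+p'\le N+1$. If $x\in F^{N+1}$ satisfies $\operatorname{rank}(H_{p,p'-1}(x))\le p$ and $\operatorname{rank}(H_{p-1,p'}(x))\le p'$, then $\operatorname{rank}(H_{p,p'-1}(x))=\operatorname{rank}(H_{p-1,p'}(x))$.
   Context: $\mathbb{N}=\{0,1,2,\ldots\}$. For $N\in\mathbb{N}$, $x=(x_0,\ldots,x_N)\in F^{N+1}$ and integers $s,t\ge -1$ with $s+t\le N$, the Hankel matrix $H_{s,t}(x)$ is the $(s+1)\times(t+1)$ matrix $(x_{i+j})_{0\le i\le s,\,0\le j\le t}$ (a matrix with zero rows or columns has rank $0$). *)

theory Defs
  imports "Jordan_Normal_Form.DL_Rank"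
begin

text \<open>The paper's H_{s,t}(x) is hankel_mat x (s+1) (t+1) (so s = -1 or t = -1 gives
  a matrix with zero rows/columns).\<close>
definition hankel_mat :: "'a vec \<Rightarrow> nat \<Rightarrow> nat \<Rightarrow> 'a mat" where
  "hankel_mat x r c = mat r c (\<lambda>(i, j). x $ (i + j))"

definition mrank :: "'a::field mat \<Rightarrow> nat" where
  "mrank A = vec_space.rank (dim_row A) A"

end

theory Submission
  imports Defs
begin


context vec_space begin

lemma span_iff_mult:
  assumes A: "A \<in> carrier_mat n m"
  shows "d \<in> span (set (cols A)) \<longleftrightarrow> (\<exists>u \<in> carrier_vec m. d = A *\<^sub>v u)"
proof -
  have cs: "set (cols A) \<subseteq> carrier_vec n" using A cols_dim by blast
  have mc: "mat_of_cols n (cols A) = A" using A by (metis carrier_matD(1) mat_of_cols_cols)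
  have len: "length (cols A) = m" using A by auto
  have "\<forall>w \<in> set (cols A). dim_vec w = n" using cs by auto
  note lm = lincomb_list_as_mat_mult[OF this, unfolded mc len]
  show ?thesis
  proof
    assume "d \<in> span (set (cols A))"
    then have "d \<in> span_list (cols A)" using span_list_as_span[OF cs] by simp
    then obtain c where "d = lincomb_list c (cols A)" unfolding span_list_def by auto
    then show "\<exists>u \<in> carrier_vec m. d = A *\<^sub>v u" using lm by auto
  next
    assume "\<exists>u \<in> carrier_vec m. d = A *\<^sub>v u"
    then obtain u where u: "u \<in> carrier_vec m" "d = A *\<^sub>v u" by auto
    have "vec m (\<lambda>i. u $ i) = u" using u(1) by auto
    then have "d = lincomb_list (\<lambda>i. u $ i) (cols A)" using lm[of "\<lambda>i. u $ i"] u by simp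
    then have "d \<in> span_list (cols A)" unfolding span_list_def by auto
    then show "d \<in> span (set (cols A))" using span_list_as_span[OF cs] by simp
  qed
qed

lemma rank_mono_span:
  assumes A: "A \<in> carrier_mat n a" and B: "B \<in> carrier_mat n b"
    and sub: "set (cols A) \<subseteq> span (set (cols B))"
  shows "rank A \<le> rank B"
proof -
  have csA: "set (cols A) \<subseteq> carrier_vec n" using A cols_dim by blast
  have csB: "set (cols B) \<subseteq> carrier_vec n" using B cols_dim by blast
  have ss: "span (set (cols A)) \<subseteq> span (set (cols B))"
    using span_subsetI[OF csB sub] .
  have s1: "subspace class_ring (span (set (cols B))) V" using span_is_subspace csB by auto
  have s2: "subspace class_ring (span (set (cols A))) V" using span_is_subspace csA by auto
  have sub2: "subspace class_ring (span (set (cols A))) (vs (span (set (cols B))))"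
    using nested_subspaces[OF s1 s2 ss] .
  have "vectorspace class_ring (vs (span (set (cols B))))" using s1 subspace_is_vs by auto
  show ?thesis unfolding rank_def
    using vectorspace.subspace_dim[OF subspace_is_vs[OF s1] sub2 fin_dim_span_cols[OF B]] 
      fin_dim_span_cols[OF A] by auto
qed

lemma maximal_cols_exists:
  assumes A: "A \<in> carrier_mat n m"
  obtains U where "maximal U (\<lambda>T. T \<subseteq> set (cols A) \<and> lin_indpt T)" "rank A = card U"
    "finite U"
proof -
  obtain S where S: "maximal S (\<lambda>T. T \<subseteq> set (cols A) \<and> lin_indpt T)"
    using maximal_exists[of "(\<lambda>T. T \<subseteq> set (cols A) \<and> lin_indpt T)" "card (set (cols A))" "{}"]
    by (meson List.finite_set card_mono empty_iff empty_subsetI finite_lin_indpt2 rev_finite_subset)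
  moreover have "finite S" using S unfolding maximal_def by (meson List.finite_set rev_finite_subset)
  ultimately show ?thesis using that rank_card_indpt[OF A S] by blast
qed

lemma maximal_span:
  assumes A: "A \<in> carrier_mat n m"
    and U: "maximal U (\<lambda>T. T \<subseteq> set (cols A) \<and> lin_indpt T)"
  shows "set (cols A) \<subseteq> span U"
proof
  fix c assume c: "c \<in> set (cols A)"
  have cs: "set (cols A) \<subseteq> carrier_vec n" using A cols_dim by blast
  have Us: "U \<subseteq> set (cols A)" "lin_indpt U" using U unfolding maximal_def by auto
  have Uc: "U \<subseteq> carrier_vec n" using Us cs by auto
  show "c \<in> span U"
  proof (rule ccontr)
    assume nc: "c \<notin> span U"
    then have "c \<notin> U" using in_own_span[OF Uc] by auto
    then have "lin_indpt (U \<union> {c})" using lin_dep_iff_in_span[OF Uc Us(2)] nc c cs by auto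
    moreover have "U \<union> {c} \<subseteq> set (cols A)" using Us c by auto
    ultimately have "U \<union> {c} = U" using U unfolding maximal_def by blast
    then show False using \<open>c \<notin> U\<close> by auto
  qed
qed


lemma rank_insert_notin_span:
  assumes A: "A \<in> carrier_mat n a" and A': "A' \<in> carrier_mat n a'"
    and cA: "set (cols A') = insert d (set (cols A))"
    and d: "d \<notin> span (set (cols A))"
  shows "rank A + 1 \<le> rank A'"
proof -
  obtain U where U: "maximal U (\<lambda>T. T \<subseteq> set (cols A) \<and> lin_indpt T)" "rank A = card U" "finite U"
    using maximal_cols_exists[OF A] by blast
  have cs: "set (cols A) \<subseteq> carrier_vec n" using A cols_dim by blast
  have cs': "set (cols A') \<subseteq> carrier_vec n" using A' cols_dim by blast
  have Us: "U \<subseteq> set (cols A)" "lin_indpt U" using U(1) unfolding maximal_def by auto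
  have Uc: "U \<subseteq> carrier_vec n" using Us cs by auto
  have "span U \<subseteq> span (set (cols A))" using span_is_monotone[OF Us(1)] .
  then have dU: "d \<notin> span U" using d by auto
  then have dU2: "d \<notin> U" using in_own_span[OF Uc] by auto
  have dc: "d \<in> carrier_vec n" using cs' cA by auto
  have li: "lin_indpt (U \<union> {d})" using lin_dep_iff_in_span[OF _ Us(2) _ dU2] Uc dc dU by auto
  have "card (U \<union> {d}) \<le> rank A'"
    using rank_ge_card_indpt[OF A' _ li] Us(1) cA by auto
  moreover have "card (U \<union> {d}) = card U + 1" using U(3) dU2 by simp
  ultimately show ?thesis using U(2) by simp
qed

lemma rank_insert_le:
  assumes A: "A \<in> carrier_mat n a" and A': "A' \<in> carrier_mat n a'"
    and cA: "set (cols A') = insert d (set (cols A))"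
  shows "rank A' \<le> rank A + 1"
proof -
  obtain U where U: "maximal U (\<lambda>T. T \<subseteq> set (cols A') \<and> lin_indpt T)" "rank A' = card U" "finite U"
    using maximal_cols_exists[OF A'] by blast
  have Us: "U \<subseteq> set (cols A')" "lin_indpt U" using U(1) unfolding maximal_def by auto
  have "lin_indpt (U - {d})" using subset_li_is_li[OF Us(2)] by auto
  moreover have "U - {d} \<subseteq> set (cols A)" using Us(1) cA by auto
  ultimately have "card (U - {d}) \<le> rank A" using rank_ge_card_indpt[OF A] by auto
  moreover have "card U \<le> card (U - {d}) + 1"
    using U(3) by (cases "d \<in> U") (auto simp: card_Diff_singleton_if card_gt_0_iff)
  ultimately show ?thesis using U(2) by simp
qed

lemma rank_insert_ge:
  assumes A: "A \<in> carrier_mat n a" and A': "A' \<in> carrier_mat n a'"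
    and cA: "set (cols A') = insert d (set (cols A))"
  shows "rank A \<le> rank A'"
proof -
  have cs': "set (cols A') \<subseteq> carrier_vec n" using A' cols_dim by blast
  show ?thesis
    by (rule rank_mono_span[OF A A'], insert in_own_span[OF cs'] cA, auto)
qed

lemma rank_insert_in_span:
  assumes A: "A \<in> carrier_mat n a" and A': "A' \<in> carrier_mat n a'"
    and cA: "set (cols A') = insert d (set (cols A))"
    and d: "d \<in> span (set (cols A))"
  shows "rank A' = rank A"
proof -
  have cs: "set (cols A) \<subseteq> carrier_vec n" using A cols_dim by blast
  have "rank A' \<le> rank A"
    by (rule rank_mono_span[OF A' A], insert in_own_span[OF cs] cA d, auto)
  then show ?thesis using rank_insert_ge[OF A A' cA] by simp
qed

lemma kernel_nonzero:
  fixes A :: "'a mat"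
  assumes A: "A \<in> carrier_mat n m" and r: "rank A < m"
  shows "\<exists>v \<in> carrier_vec m. v \<noteq> 0\<^sub>v m \<and> A *\<^sub>v v = 0\<^sub>v n"
proof (cases "distinct (cols A)")
  case True
  have "\<not> lin_indpt (set (cols A))" using lin_indpt_full_rank[OF A True] r by auto
  then show ?thesis using lin_depE[OF A _ True] by metis
next
  case False
  have len: "length (cols A) = m" using A by auto
  obtain i j where ij: "i < m" "j < m" "i \<noteq> j" "cols A ! i = cols A ! j"
    using False len by (metis distinct_conv_nth)
  have ci: "col A i = col A j" using ij A by auto
  have u: "A *\<^sub>v unit_vec m k = col A k" if "k < m" for k
    using A that by (intro eq_vecI, auto)
  define v :: "'a vec" where "v = unit_vec m i - unit_vec m j"
  have vc: "v \<in> carrier_vec m" unfolding v_def by simp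
  have "v $ i \<noteq> 0" unfolding v_def using ij by simp
  then have "v \<noteq> 0\<^sub>v m" using ij by auto
  moreover have "A *\<^sub>v v = 0\<^sub>v n"
    unfolding v_def using mult_minus_distrib_mat_vec[OF A] u ij ci A
    by (auto simp: minus_cancel_vec)
  ultimately show ?thesis using vc by blast
qed

end

lemma rank_transpose_le:
  fixes A :: "'a::field mat"
  assumes A: "A \<in> carrier_mat n m"
  shows "vec_space.rank m (transpose_mat A) \<le> vec_space.rank n A"
proof -
  interpret vn: vec_space "TYPE('a)" n .
  interpret vm: vec_space "TYPE('a)" m .
  obtain U where U: "maximal U (\<lambda>T. T \<subseteq> set (cols A) \<and> vn.lin_indpt T)" "vn.rank A = card U" "finite U"
    using vn.maximal_cols_exists[OF A] by blast
  obtain us where us: "distinct us" "set us = U" using finite_distinct_list[OF U(3)] by blast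
  define k where "k = length us"
  have k: "k = card U" using us distinct_card k_def by metis
  have cs: "set (cols A) \<subseteq> carrier_vec n" using A cols_dim by blast
  have Uc: "U \<subseteq> carrier_vec n" using U(1) cs unfolding maximal_def by auto
  define B where "B = mat_of_cols n us"
  have B: "B \<in> carrier_mat n k" unfolding B_def k_def by simp
  have cB: "set (cols B) = U" unfolding B_def using Uc us by simp
  have "\<forall>j<m. \<exists>u \<in> carrier_vec k. col A j = B *\<^sub>v u"
  proof (intro allI impI)
    fix j assume j: "j < m"
    have "col A j \<in> set (cols A)" using j A by (metis carrier_matD(2) cols_length cols_nth nth_mem)
    then have "col A j \<in> vn.span U" using vn.maximal_span[OF A U(1)] by auto
    then show "\<exists>u \<in> carrier_vec k. col A j = B *\<^sub>v u" using vn.span_iff_mult[OF B] cB by auto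
  qed
  then obtain u where u: "\<And>j. j < m \<Longrightarrow> u j \<in> carrier_vec k \<and> col A j = B *\<^sub>v u j" by metis
  define C where "C = mat k m (\<lambda>(l,j). u j $ l)"
  have C: "C \<in> carrier_mat k m" unfolding C_def by simp
  have colC: "col C j = u j" if "j < m" for j
    using u[OF that] that unfolding C_def by (auto intro!: eq_vecI)
  have ABC: "A = B * C"
    by (rule mat_col_eqI, insert A B C colC u, auto)
  have AT: "transpose_mat A = transpose_mat C * transpose_mat B"
    unfolding ABC using transpose_mult[OF B C] .
  have CT: "transpose_mat C \<in> carrier_mat m k" using C by simp
  have BT: "transpose_mat B \<in> carrier_mat k n" using B by simp
  have "set (cols (transpose_mat A)) \<subseteq> vm.span (set (cols (transpose_mat C)))"
  proof
    fix c assume "c \<in> set (cols (transpose_mat A))"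
    then obtain i where i: "i < n" "c = col (transpose_mat A) i"
      using A by (metis carrier_matD(1) cols_length cols_nth in_set_conv_nth index_transpose_mat(3))
    have "c = transpose_mat C *\<^sub>v col (transpose_mat B) i"
      using i AT col_mult2[OF CT BT i(1)] by simp
    moreover have "col (transpose_mat B) i \<in> carrier_vec k" using BT i by auto
    ultimately show "c \<in> vm.span (set (cols (transpose_mat C)))"
      using vm.span_iff_mult[OF CT] by auto
  qed
  then have "vm.rank (transpose_mat A) \<le> vm.rank (transpose_mat C)"
    using vm.rank_mono_span[OF _ CT] A by simp
  also have "\<dots> \<le> k" using vm.rank_le_nc[OF CT] .
  finally show ?thesis using U(2) k by simp
qed

lemma rank_transpose:
  fixes A :: "'a::field mat"
  assumes A: "A \<in> carrier_mat n m"
  shows "vec_space.rank m (transpose_mat A) = vec_space.rank n A"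
  using rank_transpose_le[OF A] rank_transpose_le[of "transpose_mat A" m n] A by simp




lemma hankel_carrier[simp]: "hankel_mat x a b \<in> carrier_mat a b"
  "dim_row (hankel_mat x a b) = a" "dim_col (hankel_mat x a b) = b"
  unfolding hankel_mat_def by auto

lemma hankel_index[simp]: "i < a \<Longrightarrow> j < b \<Longrightarrow> hankel_mat x a b $$ (i,j) = x $ (i+j)"
  unfolding hankel_mat_def by auto

lemma hankel_transpose: "transpose_mat (hankel_mat x a b) = hankel_mat x b a"
  by (rule eq_matI) (simp_all add: add.commute)

lemma hankel_col: "j < b \<Longrightarrow> col (hankel_mat x a b) j = vec a (\<lambda>i. x $ (i+j))"
  by (auto intro!: eq_vecI)

lemma hankel_cols_set: "set (cols (hankel_mat x a c)) = (\<lambda>j. vec a (\<lambda>i. x $ (i+j))) ` {0..<c}"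
proof -
  have "set (cols (hankel_mat x a c)) = col (hankel_mat x a c) ` {0..<c}"
    unfolding cols_def by simp
  also have "\<dots> = (\<lambda>j. vec a (\<lambda>i. x $ (i+j))) ` {0..<c}"
    by (rule image_cong[OF refl], rule hankel_col, simp)
  finally show ?thesis .
qed

lemma hankel_cols_Suc:
  "set (cols (hankel_mat x a (Suc b))) = insert (vec a (\<lambda>i. x $ (i+b))) (set (cols (hankel_mat x a b)))"
  unfolding hankel_cols_set atLeast0_lessThan_Suc image_insert ..

lemma mrank_hankel: "mrank (hankel_mat x a b) = vec_space.rank a (hankel_mat x a b)"
  by (simp only: mrank_def hankel_carrier(2))

lemma mrank_hankel_transpose: "mrank (hankel_mat x b a) = mrank (hankel_mat x a b)"
proof -
  have "vec_space.rank b (transpose_mat (hankel_mat x a b)) = vec_space.rank a (hankel_mat x a b)"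
    by (rule rank_transpose[OF hankel_carrier(1)])
  then show ?thesis by (simp only: mrank_hankel hankel_transpose)
qed




lemma core:
  fixes x :: "'a::field vec" and p q :: nat
  assumes r1: "mrank (hankel_mat x (Suc p) q) = mrank (hankel_mat x p q)"
    and r2: "mrank (hankel_mat x p q) < q"
  shows "mrank (hankel_mat x p (Suc q)) = mrank (hankel_mat x p q)"
proof -
  interpret vq: vec_space "TYPE('a)" q .
  interpret vp: vec_space "TYPE('a)" p .
  have t1: "vq.rank (hankel_mat x q (Suc p)) = vq.rank (hankel_mat x q p)"
  proof -
    have "mrank (hankel_mat x q (Suc p)) = mrank (hankel_mat x q p)"
      using r1 mrank_hankel_transpose[of x q "Suc p"] mrank_hankel_transpose[of x q p] by simp
    then show ?thesis by (simp only: mrank_hankel)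
  qed
  have rp: "vec q (\<lambda>i. x $ (i+p)) \<in> vq.span (set (cols (hankel_mat x q p)))"
  proof (rule ccontr)
    assume "vec q (\<lambda>i. x $ (i+p)) \<notin> vq.span (set (cols (hankel_mat x q p)))"
    from vq.rank_insert_notin_span[OF hankel_carrier(1) hankel_carrier(1) hankel_cols_Suc this]
    show False using t1 by simp
  qed
  then obtain u where u: "u \<in> carrier_vec p" "vec q (\<lambda>i. x $ (i+p)) = hankel_mat x q p *\<^sub>v u"
    using vq.span_iff_mult[OF hankel_carrier(1)] by blast
  have recur: "x $ (p+j) = (\<Sum>i\<in>{0..<p}. u $ i * x $ (i+j))" if j: "j < q" for j
  proof -
    have "vec q (\<lambda>i. x $ (i+p)) $ j = (hankel_mat x q p *\<^sub>v u) $ j" using u(2) by simp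
    then show ?thesis using j u(1) by (simp add: scalar_prod_def add.commute mult.commute)
  qed
  obtain v where v: "v \<in> carrier_vec q" "v \<noteq> 0\<^sub>v q" "hankel_mat x p q *\<^sub>v v = 0\<^sub>v p"
    using vp.kernel_nonzero[OF hankel_carrier(1)] r2 by (auto simp only: mrank_hankel)
  have ker: "(\<Sum>j\<in>{0..<q}. v $ j * x $ (i+j)) = 0" if i: "i < p" for i
  proof -
    have "(hankel_mat x p q *\<^sub>v v) $ i = 0" using v(3) i by simp
    then show ?thesis using i v(1) by (simp add: scalar_prod_def mult.commute)
  qed
  define K where "K = {j. j < q \<and> v $ j \<noteq> 0}"
  have "K \<noteq> {}"
  proof
    assume "K = {}"
    then have "v = 0\<^sub>v q" using v(1) unfolding K_def by (auto intro!: eq_vecI)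
    then show False using v(2) by simp
  qed
  moreover have fK: "finite K" unfolding K_def by simp
  ultimately have kK: "Max K \<in> K" by simp
  define k where "k = Max K"
  have k: "k < q" "v $ k \<noteq> 0" using kK unfolding k_def K_def by auto
  have kz: "v $ j = 0" if "k < j" "j < q" for j
  proof (rule ccontr)
    assume "v $ j \<noteq> 0"
    then have "j \<in> K" using that unfolding K_def by simp
    then have "j \<le> k" using Max_ge[OF fK] unfolding k_def by simp
    then show False using that by simp
  qed
  have P: "\<forall>i<p. (\<Sum>j\<in>{0..k}. v $ j * x $ (i+s+j)) = 0" if "s \<le> q - k" for s
    using that
  proof (induction s)
    case 0
    show ?case
    proof (intro allI impI)
      fix i assume i: "i < p"
      have "(\<Sum>j\<in>{0..<q}. v $ j * x $ (i+j)) = (\<Sum>j\<in>{0..k}. v $ j * x $ (i+j))"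
        by (rule sum.mono_neutral_right) (use k kz in auto)
      then show "(\<Sum>j\<in>{0..k}. v $ j * x $ (i+0+j)) = 0" using ker[OF i] by simp
    qed
  next
    case (Suc s)
    then have sk: "s + k < q" using k by linarith
    have IH: "\<forall>i<p. (\<Sum>j\<in>{0..k}. v $ j * x $ (i+s+j)) = 0" using Suc by simp
    show ?case
    proof (intro allI impI)
      fix i assume i: "i < p"
      show "(\<Sum>j\<in>{0..k}. v $ j * x $ (i+Suc s+j)) = 0"
      proof (cases "Suc i < p")
        case True then show ?thesis using IH[rule_format, of "Suc i"] by simp
      next
        case False then have ip: "Suc i = p" using i by simp
        have "(\<Sum>j\<in>{0..k}. v $ j * x $ (i+Suc s+j)) = (\<Sum>j\<in>{0..k}. v $ j * x $ (p+(s+j)))"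
          using ip by (intro sum.cong refl) (simp add: algebra_simps, metis add_Suc add_Suc_right)
        also have "\<dots> = (\<Sum>j\<in>{0..k}. v $ j * (\<Sum>i'\<in>{0..<p}. u $ i' * x $ (i'+(s+j))))"
          by (rule sum.cong[OF refl]) (subst recur, use sk in auto)
        also have "\<dots> = (\<Sum>j\<in>{0..k}. \<Sum>i'\<in>{0..<p}. u $ i' * (v $ j * x $ (i'+s+j)))"
          by (simp add: sum_distrib_left mult.left_commute add.assoc)
        also have "\<dots> = (\<Sum>i'\<in>{0..<p}. \<Sum>j\<in>{0..k}. u $ i' * (v $ j * x $ (i'+s+j)))"
          by (rule sum.swap)
        also have "\<dots> = (\<Sum>i'\<in>{0..<p}. u $ i' * (\<Sum>j\<in>{0..k}. v $ j * x $ (i'+s+j)))"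
          by (simp add: sum_distrib_left)
        also have "\<dots> = 0" using IH by simp
        finally show ?thesis .
      qed
    qed
  qed
  have P5: "(\<Sum>j\<in>{0..<k}. v $ j * x $ (i+(q-k)+j)) = - (v $ k * x $ (i+q))" if i: "i < p" for i
  proof -
    have "{0..k} = insert k {0..<k}" by auto
    then have "(\<Sum>j\<in>{0..k}. v $ j * x $ (i+(q-k)+j))
       = v $ k * x $ (i+(q-k)+k) + (\<Sum>j\<in>{0..<k}. v $ j * x $ (i+(q-k)+j))" by simp
    moreover have "i+(q-k)+k = i+q" using k by simp
    ultimately show ?thesis using P[of "q-k"] i by (simp add: eq_neg_iff_add_eq_0 add.commute)
  qed
  define w where "w = vec q (\<lambda>l. if q - k \<le> l then - v $ (l-(q-k)) / v $ k else 0)"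
  have wc: "w \<in> carrier_vec q" unfolding w_def by simp
  have dw: "vec p (\<lambda>i. x $ (i+q)) = hankel_mat x p q *\<^sub>v w"
  proof (rule eq_vecI)
    show "dim_vec (vec p (\<lambda>i. x $ (i+q))) = dim_vec (hankel_mat x p q *\<^sub>v w)" by simp
    fix i assume "i < dim_vec (hankel_mat x p q *\<^sub>v w)"
    then have i: "i < p" by simp
    have "(hankel_mat x p q *\<^sub>v w) $ i = (\<Sum>l\<in>{0..<q}. x $ (i+l) * w $ l)"
      using i wc by (simp add: scalar_prod_def)
    also have "\<dots> = (\<Sum>l\<in>{q-k..<q}. x $ (i+l) * (- v $ (l-(q-k)) / v $ k))"
      by (rule sum.mono_neutral_cong_right) (auto simp: w_def)
    also have "{q-k..<q} = {0+(q-k)..<k+(q-k)}" using k by simp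
    also have "(\<Sum>l\<in>{0+(q-k)..<k+(q-k)}. x $ (i+l) * (- v $ (l-(q-k)) / v $ k))
        = (\<Sum>j\<in>{0..<k}. x $ (i+(j+(q-k))) * (- v $ j / v $ k))"
      by (subst sum.shift_bounds_nat_ivl) simp
    also have "\<dots> = - (\<Sum>j\<in>{0..<k}. v $ j * x $ (i+(q-k)+j)) / v $ k"
      by (simp add: sum_divide_distrib sum_negf algebra_simps)
    also have "\<dots> = x $ (i+q)" using P5[OF i] k by simp
    finally show "vec p (\<lambda>i. x $ (i+q)) $ i = (hankel_mat x p q *\<^sub>v w) $ i" using i by simp
  qed
  have "vec p (\<lambda>i. x $ (i+q)) \<in> vp.span (set (cols (hankel_mat x p q)))"
    using vp.span_iff_mult[OF hankel_carrier(1)] wc dw by blast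
  then have "vp.rank (hankel_mat x p (Suc q)) = vp.rank (hankel_mat x p q)"
    by (rule vp.rank_insert_in_span[OF hankel_carrier(1) hankel_carrier(1) hankel_cols_Suc])
  then show ?thesis by (simp only: mrank_hankel)
qed




theorem lemma8:
  fixes x :: "'a::field vec" and N p p' :: nat
  assumes "x \<in> carrier_vec (N + 1)"
    and "p + p' \<le> N + 1"
    and "mrank (hankel_mat x (p + 1) p') \<le> p"
    and "mrank (hankel_mat x p (p' + 1)) \<le> p'"
  shows "mrank (hankel_mat x (p + 1) p') = mrank (hankel_mat x p (p' + 1))"
proof -
  interpret vp: vec_space "TYPE('a)" p .
  interpret vq: vec_space "TYPE('a)" p' .
  define r where "r = mrank (hankel_mat x p p')"
  have h2a: "r \<le> mrank (hankel_mat x p (Suc p'))" 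
    using vp.rank_insert_ge[OF hankel_carrier(1) hankel_carrier(1) hankel_cols_Suc]
    unfolding r_def by (simp only: mrank_hankel)
  have h2b: "mrank (hankel_mat x p (Suc p')) \<le> r + 1" 
    using vp.rank_insert_le[OF hankel_carrier(1) hankel_carrier(1) hankel_cols_Suc]
    unfolding r_def by (simp only: mrank_hankel)
  have rT: "r = mrank (hankel_mat x p' p)" unfolding r_def by (rule mrank_hankel_transpose[symmetric])
  have h1T: "mrank (hankel_mat x (Suc p) p') = mrank (hankel_mat x p' (Suc p))"
    by (rule mrank_hankel_transpose[symmetric])
  have h1a: "r \<le> mrank (hankel_mat x (Suc p) p')" 
    using vq.rank_insert_ge[OF hankel_carrier(1) hankel_carrier(1) hankel_cols_Suc]
    unfolding rT h1T by (simp only: mrank_hankel)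
  have h1b: "mrank (hankel_mat x (Suc p) p') \<le> r + 1" 
    using vq.rank_insert_le[OF hankel_carrier(1) hankel_carrier(1) hankel_cols_Suc]
    unfolding rT h1T by (simp only: mrank_hankel)
  have A3: "mrank (hankel_mat x (Suc p) p') \<le> p" using assms(3) by simp
  have A4: "mrank (hankel_mat x p (Suc p')) \<le> p'" using assms(4) by simp
  have "mrank (hankel_mat x (Suc p) p') = mrank (hankel_mat x p (Suc p'))"
  proof (rule ccontr)
    assume ne: "mrank (hankel_mat x (Suc p) p') \<noteq> mrank (hankel_mat x p (Suc p'))"
    show False
    proof (cases "mrank (hankel_mat x (Suc p) p') = r")
      case True
      then have "mrank (hankel_mat x p (Suc p')) = r + 1" using ne h2a h2b by simp
      then have "r < p'" using A4 by simp
      then have "mrank (hankel_mat x p (Suc p')) = r"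
        using core[of x p p'] True unfolding r_def by simp
      then show False using \<open>mrank (hankel_mat x p (Suc p')) = r + 1\<close> by simp
    next
      case False
      then have e1: "mrank (hankel_mat x (Suc p) p') = r + 1" using h1a h1b by simp
      then have e2: "mrank (hankel_mat x p (Suc p')) = r" using ne h2a h2b by simp
      have "r < p" using A3 e1 by simp
      have "mrank (hankel_mat x (Suc p') p) = mrank (hankel_mat x p' p)"
        using e2 rT mrank_hankel_transpose[of x "Suc p'" p] by simp
      then have "mrank (hankel_mat x p' (Suc p)) = mrank (hankel_mat x p' p)"
        using core[of x p' p] \<open>r < p\<close> rT by simp
      then have "mrank (hankel_mat x (Suc p) p') = r" using h1T rT by simp
      then show False using e1 by simp
    qed
  qed
  then show ?thesis by simp
qed


end
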